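(* Let $X,Y,Z$ be finite random variables forming a Markov chain $X\leftrightarrow Y\leftrightarrow Z$, let $K_1$ be the Gács–Körner common information of $(X,Y)$ and $K_2$ the Gács–Körner common information of $(X,Z)$. Then $H(K_2\mid K_1)=0$ and $H(K_2)\le H(K_1)$.
   Context: For finite random variables $X,Y$ with (w.l.o.g. disjoint) alphabets, the bipartite representation $\mathcal B_{X,Y}$ is the bipartite graph on $\mathcal X\cup\mathcal Y$ with an edge between $x$ and $y$ iff $p_{X,Y}(x,y)>0$. The Gács–Körner common information $K_{X,Y}$ is the random variable equal to the index of the connected component of $\mathcal B_{X,Y}$ containing $(X,Y)$; equivalently, it maximizes $H(U)$ over all $U$ with $H(U\mid X)=H(U\mid Y)=0$. *)

theory Defs
  imports "HOL-Probability.Probability_Mass_Function"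
begin

definition entropy_pmf :: "'a pmf \<Rightarrow> real" where
  "entropy_pmf p = - (\<Sum>a\<in>set_pmf p. pmf p a * log 2 (pmf p a))"

definition H :: "'o pmf \<Rightarrow> ('o \<Rightarrow> 'a) \<Rightarrow> real" where
  "H P X = entropy_pmf (map_pmf X P)"

definition cond_H :: "'o pmf \<Rightarrow> ('o \<Rightarrow> 'a) \<Rightarrow> ('o \<Rightarrow> 'b) \<Rightarrow> real" where
  "cond_H P X Y = H P (\<lambda>\<omega>. (X \<omega>, Y \<omega>)) - H P Y"

definition markov_chain :: "'o pmf \<Rightarrow> ('o \<Rightarrow> 'a) \<Rightarrow> ('o \<Rightarrow> 'b) \<Rightarrow> ('o \<Rightarrow> 'c) \<Rightarrow> bool" where
  "markov_chain P X Y Z \<longleftrightarrow>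
     (\<forall>x y z. pmf (map_pmf (\<lambda>\<omega>. (X \<omega>, Y \<omega>, Z \<omega>)) P) (x, y, z) * pmf (map_pmf Y P) y
            = pmf (map_pmf (\<lambda>\<omega>. (X \<omega>, Y \<omega>)) P) (x, y) * pmf (map_pmf (\<lambda>\<omega>. (Y \<omega>, Z \<omega>)) P) (y, z))"

definition bip_edges :: "('a \<times> 'b) pmf \<Rightarrow> ('a + 'b) rel" where
  "bip_edges q = {(Inl x, Inr y) | x y. pmf q (x, y) > 0} \<union> {(Inr y, Inl x) | x y. pmf q (x, y) > 0}"

definition bip_component :: "('a \<times> 'b) pmf \<Rightarrow> 'a \<Rightarrow> ('a + 'b) set" where
  "bip_component q x = (bip_edges q)\<^sup>* `` {Inl x}"

text \<open>The component is used as its own index.\<close>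
definition GK :: "'o pmf \<Rightarrow> ('o \<Rightarrow> 'a) \<Rightarrow> ('o \<Rightarrow> 'b) \<Rightarrow> 'o \<Rightarrow> ('a + 'b) set" where
  "GK P X Y = (\<lambda>\<omega>. bip_component (map_pmf (\<lambda>\<omega>'. (X \<omega>', Y \<omega>')) P) (X \<omega>))"

end

theory Submission imports Defs begin

lemma pmf_map_finite:
  assumes "finite (set_pmf p)"
  shows "pmf (map_pmf g p) b = (\<Sum>a\<in>{a\<in>set_pmf p. g a = b}. pmf p a)"
proof -
  have "pmf (map_pmf g p) b = measure p (g -` {b} \<inter> set_pmf p)"
    by (simp add: pmf_map measure_Int_set_pmf)
  also have "\<dots> = (\<Sum>a\<in>{a\<in>set_pmf p. g a = b}. pmf p a)"
    using assms by (subst measure_measure_pmf_finite) (auto intro: sum.cong)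
  finally show ?thesis .
qed

lemma entropy_map_eq:
  assumes fin: "finite (set_pmf p)"
  shows "entropy_pmf (map_pmf g p) = - (\<Sum>a\<in>set_pmf p. pmf p a * log 2 (pmf (map_pmf g p) (g a)))"
proof -
  let ?q = "pmf (map_pmf g p)"
  have "(\<Sum>b\<in>set_pmf (map_pmf g p). ?q b * log 2 (?q b))
      = (\<Sum>b\<in>g ` set_pmf p. (\<Sum>a\<in>{a\<in>set_pmf p. g a = b}. pmf p a) * log 2 (?q b))"
    using fin by (intro sum.cong) (auto simp: pmf_map_finite)
  also have "\<dots> = (\<Sum>b\<in>g ` set_pmf p. (\<Sum>a\<in>{a\<in>set_pmf p. g a = b}. pmf p a * log 2 (?q (g a))))"
    by (intro sum.cong refl) (auto simp: sum_distrib_right)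
  also have "\<dots> = (\<Sum>a\<in>set_pmf p. pmf p a * log 2 (?q (g a)))"
    using sum.image_gen[OF fin, of "\<lambda>a. pmf p a * log 2 (?q (g a))" g] by simp
  finally show ?thesis unfolding entropy_pmf_def by simp
qed

lemma entropy_map_le:
  assumes fin: "finite (set_pmf p)"
  shows "entropy_pmf (map_pmf g p) \<le> entropy_pmf p"
proof -
  have "(\<Sum>a\<in>set_pmf p. pmf p a * log 2 (pmf p a)) \<le> (\<Sum>a\<in>set_pmf p. pmf p a * log 2 (pmf (map_pmf g p) (g a)))"
  proof (intro sum_mono mult_left_mono)
    fix a assume a: "a \<in> set_pmf p"
    have "pmf p a \<le> pmf (map_pmf g p) (g a)"
      using fin a by (subst pmf_map_finite) (auto intro!: member_le_sum)
    then show "log 2 (pmf p a) \<le> log 2 (pmf (map_pmf g p) (g a))"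
    proof -
      have "pmf p a > 0" using a by (simp add: pmf_positive)
      then show ?thesis using \<open>pmf p a \<le> _\<close> by (simp add: log_le_cancel_iff)
    qed
  qed simp
  then show ?thesis using entropy_map_eq[OF fin, of g] unfolding entropy_pmf_def by simp
qed

lemma entropy_map_inj:
  assumes fin: "finite (set_pmf p)" and inj: "inj_on g (set_pmf p)"
  shows "entropy_pmf (map_pmf g p) = entropy_pmf p"
  using entropy_map_eq[OF fin, of g] inj unfolding entropy_pmf_def
  by (simp add: pmf_map_inj)

lemma pos_iff: "pmf p a > 0 \<longleftrightarrow> a \<in> set_pmf p"
  by (simp add: pmf_positive_iff)

lemma edge_step:
  assumes mc: "markov_chain P X Y Z"
    and h1: "pmf (map_pmf (\<lambda>\<omega>. (X \<omega>, Y \<omega>)) P) (x, y) > 0"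
    and h2: "pmf (map_pmf (\<lambda>\<omega>. (X \<omega>, Y \<omega>)) P) (x', y) > 0"
  shows "(Inl x, Inl x') \<in> (bip_edges (map_pmf (\<lambda>\<omega>. (X \<omega>, Z \<omega>)) P))\<^sup>*"
proof -
  from h1 obtain w where w: "w \<in> set_pmf P" "X w = x" "Y w = y" by (auto simp: pos_iff)
  define z where "z = Z w"
  have pY: "pmf (map_pmf Y P) y > 0" using w by (auto simp: pos_iff)
  have pYZ: "pmf (map_pmf (\<lambda>\<omega>. (Y \<omega>, Z \<omega>)) P) (y, z) > 0" using w by (auto simp: pos_iff z_def)
  have xz: "pmf (map_pmf (\<lambda>\<omega>. (X \<omega>, Z \<omega>)) P) (u, z) > 0"
    if hu: "pmf (map_pmf (\<lambda>\<omega>. (X \<omega>, Y \<omega>)) P) (u, y) > 0" for u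
  proof -
    have "pmf (map_pmf (\<lambda>\<omega>. (X \<omega>, Y \<omega>, Z \<omega>)) P) (u, y, z) * pmf (map_pmf Y P) y > 0"
      using mc hu pYZ unfolding markov_chain_def by simp
    then have "pmf (map_pmf (\<lambda>\<omega>. (X \<omega>, Y \<omega>, Z \<omega>)) P) (u, y, z) > 0"
      using pY by (simp add: zero_less_mult_iff)
    then obtain v where "v \<in> set_pmf P" "X v = u" "Y v = y" "Z v = z" by (auto simp: pos_iff)
    then show ?thesis by (auto simp: pos_iff)
  qed
  have "(Inl x, Inr z) \<in> bip_edges (map_pmf (\<lambda>\<omega>. (X \<omega>, Z \<omega>)) P)"
    using xz[OF h1] unfolding bip_edges_def by blast
  moreover have "(Inr z, Inl x') \<in> bip_edges (map_pmf (\<lambda>\<omega>. (X \<omega>, Z \<omega>)) P)"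
    using xz[OF h2] unfolding bip_edges_def by blast
  ultimately show ?thesis by (meson converse_rtrancl_into_rtrancl r_into_rtrancl)
qed

lemma path_lemma:
  assumes mc: "markov_chain P X Y Z"
    and "(Inl x, v) \<in> (bip_edges (map_pmf (\<lambda>\<omega>. (X \<omega>, Y \<omega>)) P))\<^sup>*"
  shows "(\<forall>x'. v = Inl x' \<longrightarrow> (Inl x, Inl x') \<in> (bip_edges (map_pmf (\<lambda>\<omega>. (X \<omega>, Z \<omega>)) P))\<^sup>*) \<and>
         (\<forall>y. v = Inr y \<longrightarrow> (\<exists>x'. (Inl x, Inl x') \<in> (bip_edges (map_pmf (\<lambda>\<omega>. (X \<omega>, Z \<omega>)) P))\<^sup>*
               \<and> pmf (map_pmf (\<lambda>\<omega>. (X \<omega>, Y \<omega>)) P) (x', y) > 0))"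
  using assms(2)
proof (induction rule: rtrancl_induct)
  case base
  then show ?case by simp
next
  case (step v w)
  let ?q = "map_pmf (\<lambda>\<omega>. (X \<omega>, Y \<omega>)) P"
  from step.hyps(2) consider (A) a b where "v = Inl a" "w = Inr b" "pmf ?q (a, b) > 0"
    | (B) a b where "v = Inr b" "w = Inl a" "pmf ?q (a, b) > 0"
    unfolding bip_edges_def by blast
  then show ?case
  proof cases
    case (A a b)
    then show ?thesis using step.IH by auto
  next
    case (B a b)
    then obtain x' where x': "(Inl x, Inl x') \<in> (bip_edges (map_pmf (\<lambda>\<omega>. (X \<omega>, Z \<omega>)) P))\<^sup>*"
        "pmf ?q (x', b) > 0" using step.IH by auto
    have "(Inl x', Inl a) \<in> (bip_edges (map_pmf (\<lambda>\<omega>. (X \<omega>, Z \<omega>)) P))\<^sup>*"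
      using edge_step[OF mc x'(2) B(3)] .
    then show ?thesis using B x'(1) by (auto intro: rtrancl_trans)
  qed
qed

lemma sym_bip: "sym (bip_edges q)"
  unfolding bip_edges_def sym_def by blast

lemma comp_eq:
  assumes "sym E" "(a, b) \<in> E\<^sup>*"
  shows "E\<^sup>* `` {a} = E\<^sup>* `` {b}"
proof -
  have "(b, a) \<in> E\<^sup>*" using assms sym_rtrancl by (metis symD)
  then show ?thesis using assms(2) by (auto intro: rtrancl_trans)
qed

theorem corollary1:
  fixes P :: "'o pmf" and X :: "'o \<Rightarrow> 'a" and Y :: "'o \<Rightarrow> 'b" and Z :: "'o \<Rightarrow> 'c"
  assumes "finite (X ` set_pmf P)" and "finite (Y ` set_pmf P)" and "finite (Z ` set_pmf P)"
    and "markov_chain P X Y Z"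
  shows "cond_H P (GK P X Z) (GK P X Y) = 0 \<and> H P (GK P X Z) \<le> H P (GK P X Y)"
proof -
  define K1 where "K1 = GK P X Y"
  define K2 where "K2 = GK P X Z"
  have key: "K2 w = K2 w'" if "w \<in> set_pmf P" "w' \<in> set_pmf P" "K1 w = K1 w'" for w w'
  proof -
    have "Inl (X w') \<in> K1 w'" unfolding K1_def GK_def bip_component_def by simp
    then have "(Inl (X w), Inl (X w')) \<in> (bip_edges (map_pmf (\<lambda>\<omega>. (X \<omega>, Y \<omega>)) P))\<^sup>*"
      using that(3) \<open>Inl (X w') \<in> K1 w'\<close> unfolding K1_def GK_def bip_component_def by auto
    from path_lemma[OF assms(4) this]
    have "(Inl (X w), Inl (X w')) \<in> (bip_edges (map_pmf (\<lambda>\<omega>. (X \<omega>, Z \<omega>)) P))\<^sup>*" by simp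
    from comp_eq[OF sym_bip this] show ?thesis
      unfolding K2_def GK_def bip_component_def by simp
  qed
  define f where "f k = K2 (SOME w. w \<in> set_pmf P \<and> K1 w = k)" for k
  have fK: "f (K1 w) = K2 w" if "w \<in> set_pmf P" for w
  proof -
    have "\<exists>v. v \<in> set_pmf P \<and> K1 v = K1 w" using that by blast
    then have "(SOME v. v \<in> set_pmf P \<and> K1 v = K1 w) \<in> set_pmf P \<and> K1 (SOME v. v \<in> set_pmf P \<and> K1 v = K1 w) = K1 w"
      by (rule someI_ex)
    then show ?thesis unfolding f_def using key that by blast
  qed
  have fin: "finite (set_pmf (map_pmf K1 P))"
  proof -
    have "K1 ` set_pmf P = (\<lambda>x. bip_component (map_pmf (\<lambda>\<omega>. (X \<omega>, Y \<omega>)) P) x) ` (X ` set_pmf P)"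
      unfolding K1_def GK_def by auto
    then show ?thesis using assms(1) by simp
  qed
  have m2: "map_pmf K2 P = map_pmf f (map_pmf K1 P)"
    by (simp add: map_pmf_comp fK cong: map_pmf_cong)
  have m21: "map_pmf (\<lambda>w. (K2 w, K1 w)) P = map_pmf (\<lambda>k. (f k, k)) (map_pmf K1 P)"
    by (simp add: map_pmf_comp fK cong: map_pmf_cong)
  have inj: "inj_on (\<lambda>k. (f k, k)) (set_pmf (map_pmf K1 P))" by (auto intro: inj_onI)
  have "cond_H P K2 K1 = 0"
    unfolding cond_H_def H_def m21 using entropy_map_inj[OF fin inj] by simp
  moreover have "H P K2 \<le> H P K1"
    unfolding H_def m2 using entropy_map_le[OF fin] .
  ultimately show ?thesis unfolding K1_def K2_def by simp
qed

end
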